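(* If $\mathbf M\in\mathcal M_1$, then every component of $\liminf_{n\to\infty}\mathbf M^n\mathbf 1^T$ is finite, i.e. $\liminf_{n\to\infty}\sum_{j\in\mathbb N}M^{(n)}_{ij}<\infty$ for every $i\in\mathbb N$. If $\mathbf M\in\mathcal M_1^0$, then there is a constant $C\in(0,\infty)$ such that $$M_i^{(n)}:=\sum_{j\in\mathbb N}M^{(n)}_{ij}\le Cu_i\le CU<\infty\quad\text{for all } i,n\in\mathbb N.$$
   Context: A GWBP/$\infty$ has types $\mathbb N=\{1,2,\dots\}$; a type-$i$ particle produces a random vector $\mathbf Z_i=(Z_{ij})_{j\in\mathbb N}$ of children with $Z_i:=\sum_jZ_{ij}<\infty$ a.s.; $\mathbf Z_i(n)=(Z_{ij}(n))_j$ is the generation-$n$ population from one type-$i$ particle. Mean matrix $\mathbf M=(M_{ij})$, $M_{ij}=\mathbb EZ_{ij}$, $\mathbf M^n=(M^{(n)}_{ij})$ with $M^{(n)}_{ij}=\mathbb EZ_{ij}(n)$, $M_i=\sum_jM_{ij}=\mathbb EZ_i$. Irreducible: for all $i,j$ some $M^{(n)}_{ij}>0$; aperiodic: gcd of such $n$ is 1; then $\lim_n(M^{(n)}_{ij})^{1/n}=1/R$ for a common $R$. $\mathbf M\in\mathcal M_1$ means: (i) irreducible, aperiodic, $R=1$, 1-recurrent ($\sum_nM^{(n)}_{ij}=\infty$) and 1-positive ($\lim_nM^{(n)}_{ij}>0$ for all $i,j$); then there are positive eigenvectors $\mathbf v\mathbf M=\mathbf v$, $\mathbf M\mathbf u^T=\mathbf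 u^T$, unique up to positive multiples, normalized with $\sum_jv_ju_j=1$; (ii) $\sum_jv_j=1$ and $U:=\sup_iu_i<\infty$; (iii) $\lim_{N\to\infty}\sup_iM_i^{-1}\sum_{j>N}M_{ij}=0$ and $\lim_{K\to\infty}\sup_iM_i^{-1}\mathbb E[Z_i;Z_i>K]=0$. $\mathbf M\in\mathcal M_1^0$ means $\mathbf M\in\mathcal M_1$ and (iv) there exist $m\in\mathbb N$, $c,C>0$ with $M_{ij}<Cu_iv_j$ and $M^{(m)}_{1j}>cv_j$ for all $i,j$. *)

theory Defs
  imports "HOL-Probability.Probability"
begin

text \<open>Types are labelled 0,1,2,... (the paper's type k is our type k-1).
  The offspring law of a type-i particle is a pmf on offspring vectors
  z :: nat => nat (z j = number of type-j children).  Since Z_i is a.s. finite,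
  the law is concentrated on finitely supported vectors, a countable set, so a
  pmf describes it without loss of generality.\<close>

type_synonym offspring = "nat \<Rightarrow> (nat \<Rightarrow> nat) pmf"

definition offspring_finite :: "offspring \<Rightarrow> bool" where
  "offspring_finite P \<longleftrightarrow> (\<forall>i. \<forall>z\<in>set_pmf (P i). finite {j. z j \<noteq> 0})"

definition Ztot :: "(nat \<Rightarrow> nat) \<Rightarrow> nat" where
  "Ztot z = (\<Sum>j\<in>{j. z j \<noteq> 0}. z j)"

definition mean_mat :: "offspring \<Rightarrow> nat \<Rightarrow> nat \<Rightarrow> ennreal" where
  "mean_mat P i j = (\<integral>\<^sup>+ z. of_nat (z j) \<partial>measure_pmf (P i))"

definition mean_row :: "offspring \<Rightarrow> nat \<Rightarrow> ennreal" where
  "mean_row P i = (\<Sum>j. mean_mat P i j)"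

fun Mpow :: "(nat \<Rightarrow> nat \<Rightarrow> ennreal) \<Rightarrow> nat \<Rightarrow> nat \<Rightarrow> nat \<Rightarrow> ennreal" where
  "Mpow M 0 i j = (if i = j then 1 else 0)"
| "Mpow M (Suc n) i j = (\<Sum>k. Mpow M n i k * M k j)"

definition irreducible_mat :: "(nat \<Rightarrow> nat \<Rightarrow> ennreal) \<Rightarrow> bool" where
  "irreducible_mat M \<longleftrightarrow> (\<forall>i j. \<exists>n\<ge>1. Mpow M n i j > 0)"

definition aperiodic_mat :: "(nat \<Rightarrow> nat \<Rightarrow> ennreal) \<Rightarrow> bool" where
  "aperiodic_mat M \<longleftrightarrow> (\<forall>i. Gcd {n. n \<ge> 1 \<and> Mpow M n i i > 0} = 1)"

definition conv_param_one :: "(nat \<Rightarrow> nat \<Rightarrow> ennreal) \<Rightarrow> bool" where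
  "conv_param_one M \<longleftrightarrow> (\<forall>i j. (\<lambda>n. root n (enn2real (Mpow M n i j))) \<longlonglongrightarrow> 1)"

definition one_recurrent :: "(nat \<Rightarrow> nat \<Rightarrow> ennreal) \<Rightarrow> bool" where
  "one_recurrent M \<longleftrightarrow> (\<forall>i j. (\<Sum>n. Mpow M n i j) = \<infinity>)"

definition one_positive :: "(nat \<Rightarrow> nat \<Rightarrow> ennreal) \<Rightarrow> bool" where
  "one_positive M \<longleftrightarrow> (\<forall>i j. \<exists>L>0. (\<lambda>n. Mpow M n i j) \<longlonglongrightarrow> L)"

definition eigvecs :: "(nat \<Rightarrow> nat \<Rightarrow> ennreal) \<Rightarrow> (nat \<Rightarrow> real) \<Rightarrow> (nat \<Rightarrow> real) \<Rightarrow> bool" where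
  "eigvecs M u v \<longleftrightarrow>
     (\<forall>i. u i > 0) \<and> (\<forall>j. v j > 0) \<and>
     (\<forall>j. (\<Sum>i. ennreal (v i) * M i j) = ennreal (v j)) \<and>
     (\<forall>i. (\<Sum>j. M i j * ennreal (u j)) = ennreal (u i)) \<and>
     (\<Sum>j. ennreal (v j * u j)) = 1"

definition trunc_mean :: "offspring \<Rightarrow> nat \<Rightarrow> nat \<Rightarrow> ennreal" where
  "trunc_mean P i K = (\<integral>\<^sup>+ z. (if Ztot z > K then of_nat (Ztot z) else 0) \<partial>measure_pmf (P i))"

definition class_M1 :: "offspring \<Rightarrow> (nat \<Rightarrow> real) \<Rightarrow> (nat \<Rightarrow> real) \<Rightarrow> bool" where
  "class_M1 P u v \<longleftrightarrow>
     (let M = mean_mat P in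
      \<comment> \<open>(i)\<close>
      irreducible_mat M \<and> aperiodic_mat M \<and> conv_param_one M \<and>
      one_recurrent M \<and> one_positive M \<and> eigvecs M u v \<and>
      \<comment> \<open>(ii)\<close>
      (\<Sum>j. ennreal (v j)) = 1 \<and> bdd_above (range u) \<and>
      \<comment> \<open>(iii) (M_i finite, so that the ratios make sense)\<close>
      (\<forall>i. mean_row P i < \<infinity>) \<and>
      (\<lambda>N. \<Squnion>i. (\<Sum>j. if j > N then M i j else 0) / mean_row P i) \<longlonglongrightarrow> 0 \<and>
      (\<lambda>K. \<Squnion>i. trunc_mean P i K / mean_row P i) \<longlonglongrightarrow> 0)"

text \<open>the class M_1^0 (type 1 of the paper is our type 0)\<close>
definition class_M10 :: "offspring \<Rightarrow> (nat \<Rightarrow> real) \<Rightarrow> (nat \<Rightarrow> real) \<Rightarrow> bool" where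
  "class_M10 P u v \<longleftrightarrow> class_M1 P u v \<and>
     (\<exists>m::nat. \<exists>c C::real. m \<ge> 1 \<and> c > 0 \<and> C > 0 \<and>
        (\<forall>i j. mean_mat P i j < ennreal (C * u i * v j)) \<and>
        (\<forall>j. Mpow (mean_mat P) m 0 j > ennreal (c * v j)))"

end

theory Submission imports Defs begin

lemma swap: "(\<Sum>i. \<Sum>j. (f::nat\<Rightarrow>nat\<Rightarrow>ennreal) i j) = (\<Sum>j. \<Sum>i. f i j)"
proof -
  interpret pair_sigma_finite "count_space (UNIV::nat set)" "count_space (UNIV::nat set)"
    by (simp add: pair_sigma_finite.intro sigma_finite_measure_count_space)
  have "(\<integral>\<^sup>+ i. \<integral>\<^sup>+ j. f i j \<partial>count_space UNIV \<partial>count_space UNIV) =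
        (\<integral>\<^sup>+ j. \<integral>\<^sup>+ i. f i j \<partial>count_space UNIV \<partial>count_space UNIV)"
    using Fubini'[of f] by (simp add: pair_measure_countable)
  then show ?thesis by (simp add: nn_integral_count_space_nat)
qed

lemma single_sum: "(\<Sum>j. (if i = j then 1 else 0) * (f j::ennreal)) = f i"
proof -
  have "(\<Sum>j. (if i = j then 1 else 0) * f j) = (\<Sum>j\<in>{i}. (if i = j then 1 else 0) * f j)"
    by (rule suminf_finite) auto
  then show ?thesis by simp
qed

lemma Mpow_Suc_row: "(\<Sum>j. Mpow M (Suc n) i j * (g j::ennreal)) = (\<Sum>k. Mpow M n i k * (\<Sum>j. M k j * g j))"
proof -
  have "(\<Sum>j. Mpow M (Suc n) i j * g j) = (\<Sum>j. \<Sum>k. Mpow M n i k * (M k j * g j))"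
    by (simp only: Mpow.simps ennreal_suminf_multc[symmetric] mult.assoc)
  also have "\<dots> = (\<Sum>k. \<Sum>j. Mpow M n i k * (M k j * g j))" by (rule swap)
  also have "\<dots> = (\<Sum>k. Mpow M n i k * (\<Sum>j. M k j * g j))" by simp
  finally show ?thesis .
qed

lemma eig_pow:
  assumes "\<And>i. (\<Sum>j. M i j * ennreal (u j)) = ennreal (u i)"
  shows "(\<Sum>j. Mpow M n i j * ennreal (u j)) = ennreal (u i)"
proof (induction n arbitrary: i)
  case 0
  then show ?case by (simp only: Mpow.simps single_sum)
next
  case (Suc n)
  then show ?case by (simp only: Mpow_Suc_row assms)
qed

lemma term_le_sum: "(f::nat\<Rightarrow>ennreal) j \<le> (\<Sum>j. f j)"
  using sum_le_suminf[of f "{j}"] by (simp add: summableI)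

lemma Mpow_le_ratio:
  assumes "\<And>i. (\<Sum>j. M i j * ennreal (u j)) = ennreal (u i)" "u j > 0" "u i \<ge> 0"
  shows "Mpow M n i j \<le> ennreal (u i / u j)"
proof -
  have h: "Mpow M n i j * ennreal (u j) \<le> ennreal (u i)"
    using term_le_sum[of "\<lambda>j. Mpow M n i j * ennreal (u j)" j] eig_pow[OF assms(1)] by simp
  then have "Mpow M n i j \<noteq> \<infinity>" using assms(2) by (auto simp: ennreal_mult_top top_unique)
  then obtain y where y: "Mpow M n i j = ennreal y" "y \<ge> 0" by (cases "Mpow M n i j") auto
  have "y * u j \<le> u i" using h y assms by (simp add: ennreal_mult''[symmetric] ennreal_le_iff)
  then have "y \<le> u i / u j" using assms(2) by (simp add: field_simps)
  then show ?thesis using y by simp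
qed


lemma pow_bound:
  assumes eig: "\<And>i. (\<Sum>j. M i j * ennreal (u j)) = ennreal (u i)"
    and le: "\<And>k j. M k j \<le> ennreal (C * u k * v j)"
    and pos: "C \<ge> 0" "\<And>k. u k \<ge> 0" "\<And>j. v j \<ge> 0"
  shows "Mpow M (Suc n) i j \<le> ennreal (C * u i * v j)"
proof -
  have "Mpow M (Suc n) i j = (\<Sum>k. Mpow M n i k * M k j)" by simp
  also have "\<dots> \<le> (\<Sum>k. Mpow M n i k * ennreal (u k) * ennreal (C * v j))"
  proof (rule suminf_le)
    fix k
    have "M k j \<le> ennreal (u k) * ennreal (C * v j)"
      using le[of k j] pos by (simp add: ennreal_mult''[symmetric] mult_ac)
    then show "Mpow M n i k * M k j \<le> Mpow M n i k * ennreal (u k) * ennreal (C * v j)"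
      by (simp add: mult.assoc mult_left_mono)
  qed (auto intro: summableI)
  also have "\<dots> = ennreal (u i) * ennreal (C * v j)"
    using eig_pow[OF eig, of n i] by simp
  also have "\<dots> = ennreal (C * u i * v j)"
    using pos by (simp add: ennreal_mult''[symmetric] mult_ac)
  finally show ?thesis .
qed

lemma row_bound:
  assumes eig: "\<And>i. (\<Sum>j. M i j * ennreal (u j)) = ennreal (u i)"
    and le: "\<And>k j. M k j \<le> ennreal (C * u k * v j)"
    and pos: "C \<ge> 0" "\<And>k. u k \<ge> 0" "\<And>j. v j \<ge> 0"
    and vs: "(\<Sum>j. ennreal (v j)) = 1"
  shows "(\<Sum>j. Mpow M (Suc n) i j) \<le> ennreal (C * u i)"
proof -
  have "(\<Sum>j. Mpow M (Suc n) i j) \<le> (\<Sum>j. ennreal (C * u i) * ennreal (v j))"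
  proof (rule suminf_le)
    fix j
    show "Mpow M (Suc n) i j \<le> ennreal (C * u i) * ennreal (v j)"
      using pow_bound[OF eig le pos, of n i j] pos by (simp add: ennreal_mult''[symmetric])
  qed (auto intro: summableI)
  also have "\<dots> = ennreal (C * u i)" using vs by simp
  finally show ?thesis .
qed


lemma row_le_head:
  fixes M :: "nat \<Rightarrow> nat \<Rightarrow> ennreal"
  assumes fin: "(\<Sum>j. M i j) < \<infinity>"
    and rat: "(\<Sum>j. if j > N then M i j else 0) / (\<Sum>j. M i j) < 1/2"
  shows "(\<Sum>j. M i j) \<le> 2 * (\<Sum>j\<le>N. M i j)"
proof -
  define R where "R = (\<Sum>j. M i j)"
  define T where "T = (\<Sum>j. if j > N then M i j else 0)"
  define H where "H = (\<Sum>j\<le>N. M i j)"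
  have hs: "(\<Sum>j. if j \<le> N then M i j else 0) = H"
    unfolding H_def by (subst suminf_finite[of "{..N}"]) auto
  have "R = (\<Sum>j. (if j \<le> N then M i j else 0) + (if j > N then M i j else 0))"
    unfolding R_def by (intro suminf_cong) auto
  also have "\<dots> = H + T" unfolding T_def hs[symmetric]
    by (rule suminf_add[symmetric]) (auto intro: summableI)
  finally have RHT: "R = H + T" .
  show ?thesis
  proof (cases "R = 0")
    case True then show ?thesis unfolding R_def by simp
  next
    case False
    have Rf: "R < \<infinity>" using fin R_def by simp
    then obtain r where r: "R = ennreal r" "r \<ge> 0" by (cases R) auto
    have "T < \<infinity>" "H < \<infinity>" using Rf RHT by (auto simp: top_unique)
    then obtain t h where t: "T = ennreal t" "t \<ge> 0" and h: "H = ennreal h" "h \<ge> 0"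
      by (cases T; cases H) auto
    have rp: "r > 0" using False r by auto
    have half: "(1/2::ennreal) = ennreal (1/2)"
      using ennreal_divide_numeral[of 1 "Num.Bit0 Num.One"] by simp
    have "ennreal (t / r) < ennreal (1/2)" using rat half r t rp unfolding R_def[symmetric] T_def[symmetric]
      by (simp add: divide_ennreal)
    then have "t / r < 1/2" by (rule ennreal_less_iff[THEN iffD1, rotated]) (use t(2) rp in auto)
    then have "t < r / 2" using rp by (simp add: field_simps)
    moreover have "r = h + t" using RHT r t h by (simp add: ennreal_plus[symmetric] del: ennreal_plus)
    ultimately have "r \<le> 2 * h" by simp
    then have "ennreal r \<le> ennreal (2 * h)" by (rule ennreal_leI)
    also have "ennreal (2 * h) = 2 * ennreal h" using h by (simp add: ennreal_mult)
    finally show ?thesis using r h unfolding R_def[symmetric] H_def[symmetric] by simp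
  qed
qed

lemma row_bound1:
  fixes M :: "nat \<Rightarrow> nat \<Rightarrow> ennreal"
  assumes eig: "\<And>i. (\<Sum>j. M i j * ennreal (u j)) = ennreal (u i)"
    and upos: "\<And>k. u k > 0"
    and head: "\<And>k. (\<Sum>j. M k j) \<le> 2 * (\<Sum>j\<le>N. M k j)"
  shows "(\<Sum>j. Mpow M (Suc n) i j) \<le> 2 * (\<Sum>j\<le>N. ennreal (u i / u j))"
proof -
  have "(\<Sum>j. Mpow M (Suc n) i j) = (\<Sum>k. Mpow M n i k * (\<Sum>j. M k j))"
    using Mpow_Suc_row[of M n i "\<lambda>_. 1"] by simp
  also have "\<dots> \<le> (\<Sum>k. Mpow M n i k * (2 * (\<Sum>j\<le>N. M k j)))"
    by (rule suminf_le) (auto intro: summableI mult_left_mono head)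
  also have "\<dots> = (\<Sum>k. 2 * (\<Sum>j\<le>N. Mpow M n i k * M k j))"
    by (intro suminf_cong) (simp add: sum_distrib_left mult_ac)
  also have "\<dots> = 2 * (\<Sum>k. \<Sum>j\<le>N. Mpow M n i k * M k j)"
    by (rule ennreal_suminf_cmult)
  also have "(\<Sum>k. \<Sum>j\<le>N. Mpow M n i k * M k j) = (\<Sum>j\<le>N. \<Sum>k. Mpow M n i k * M k j)"
    by (rule suminf_sum) (auto intro: summableI)
  also have "\<dots> = (\<Sum>j\<le>N. Mpow M (Suc n) i j)" by simp
  also have "\<dots> \<le> (\<Sum>j\<le>N. ennreal (u i / u j))"
    by (rule sum_mono) (rule Mpow_le_ratio[OF eig upos], simp add: less_imp_le upos)
  finally show ?thesis by (simp add: mult_left_mono)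
qed


theorem lemma1:
  fixes P :: offspring and u v :: "nat \<Rightarrow> real"
  assumes "offspring_finite P"
  shows "(class_M1 P u v \<longrightarrow>
            (\<forall>i. liminf (\<lambda>n. \<Sum>j. Mpow (mean_mat P) n i j) < \<infinity>)) \<and>
         (class_M10 P u v \<longrightarrow>
            (\<exists>C::real. C > 0 \<and>
               (\<forall>i n. n \<ge> 1 \<longrightarrow>
                  (\<Sum>j. Mpow (mean_mat P) n i j) \<le> ennreal (C * u i) \<and>
                  C * u i \<le> C * (SUP k. u k))))"
proof (intro conjI impI allI)
  fix i
  assume M1: "class_M1 P u v"
  define M where "M = mean_mat P"
  have eig: "\<And>i. (\<Sum>j. M i j * ennreal (u j)) = ennreal (u i)"
    and upos: "\<And>k. u k > 0"
    and fin: "\<And>i. (\<Sum>j. M i j) < \<infinity>"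
    and tl: "(\<lambda>N. \<Squnion>i. (\<Sum>j. if j > N then M i j else 0) / (\<Sum>j. M i j)) \<longlonglongrightarrow> 0"
    using M1 unfolding class_M1_def eigvecs_def Let_def M_def mean_row_def by auto
  have "eventually (\<lambda>N. (\<Squnion>i. (\<Sum>j. if j > N then M i j else 0) / (\<Sum>j. M i j)) < 1/2) sequentially"
    by (rule order_tendstoD(2)[OF tl]) (simp add: ennreal_zero_less_divide)
  then obtain N where N: "(\<Squnion>i. (\<Sum>j. if j > N then M i j else 0) / (\<Sum>j. M i j)) < 1/2"
    by (auto simp: eventually_sequentially)
  have head: "\<And>k. (\<Sum>j. M k j) \<le> 2 * (\<Sum>j\<le>N. M k j)"
  proof -
    fix k
    have "(\<Sum>j. if j > N then M k j else 0) / (\<Sum>j. M k j) < 1/2"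
      by (rule le_less_trans[OF _ N]) (rule SUP_upper, simp)
    then show "(\<Sum>j. M k j) \<le> 2 * (\<Sum>j\<le>N. M k j)" by (rule row_le_head[OF fin])
  qed
  define B where "B = 2 * (\<Sum>j\<le>N. ennreal (u i / u j))"
  have Bfin: "B < \<infinity>" unfolding B_def
    by (simp add: ennreal_mult_less_top sum_ennreal[symmetric] del: sum_ennreal)
  have "eventually (\<lambda>n. (\<Sum>j. Mpow M n i j) \<le> B) sequentially"
    unfolding eventually_sequentially
  proof (intro exI allI impI)
    fix n :: nat assume "n \<ge> 1"
    then obtain m where "n = Suc m" by (cases n) auto
    then show "(\<Sum>j. Mpow M n i j) \<le> B" unfolding B_def
      using row_bound1[OF eig upos head] by simp
  qed
  then have "limsup (\<lambda>n. \<Sum>j. Mpow M n i j) \<le> B" by (rule Limsup_bounded)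
  then have "liminf (\<lambda>n. \<Sum>j. Mpow M n i j) \<le> B"
    using Liminf_le_Limsup[of sequentially] order_trans by fastforce
  then show "liminf (\<lambda>n. \<Sum>j. Mpow (mean_mat P) n i j) < \<infinity>"
    using Bfin unfolding M_def by simp
next
  assume M10: "class_M10 P u v"
  define M where "M = mean_mat P"
  have eig: "\<And>i. (\<Sum>j. M i j * ennreal (u j)) = ennreal (u i)"
    and upos: "\<And>k. u k > 0" and vpos: "\<And>k. v k > 0"
    and vs: "(\<Sum>j. ennreal (v j)) = 1"
    and bdd: "bdd_above (range u)"
    using M10 unfolding class_M10_def class_M1_def eigvecs_def Let_def M_def by auto
  obtain C :: real where C: "C > 0" and le: "\<And>i j. M i j < ennreal (C * u i * v j)"
    using M10 unfolding class_M10_def M_def by auto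
  show "\<exists>C::real. C > 0 \<and>
               (\<forall>i n. n \<ge> 1 \<longrightarrow>
                  (\<Sum>j. Mpow (mean_mat P) n i j) \<le> ennreal (C * u i) \<and>
                  C * u i \<le> C * (SUP k. u k))"
  proof (intro exI conjI allI impI)
    show "C > 0" by (rule C)
    fix i n :: nat assume "n \<ge> 1"
    then obtain m where m: "n = Suc m" by (cases n) auto
    show "(\<Sum>j. Mpow (mean_mat P) n i j) \<le> ennreal (C * u i)"
      using row_bound[OF eig less_imp_le[OF le] less_imp_le[OF C] less_imp_le[OF upos]
          less_imp_le[OF vpos] vs] m unfolding M_def by simp
    show "C * u i \<le> C * (SUP k. u k)"
      using C bdd by (intro mult_left_mono cSUP_upper) auto
  qed
qed

end
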